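(* Let $n\in\mathbb N$ with $n\ge 10$ and let $T_n$ be a tree on $n$ vertices with $\Delta(T_n)=n-4$. Suppose that for every integer $m\ge n$ and every connected graph $H\in\mathrm{Ex}(m;T_n)$ we have $\Delta(H)\le n-4$. Let $p=k(n-1)+r\ge n-1$ with $k\in\mathbb N$ and $r\in\{0,1,\ldots,n-2\}$. Then $$\frac{(n-2)p-r(n-1-r)}2\le\mathrm{ex}(p;T_n)\le\frac{(n-2)p}2-\min\Big\{n-1+r,\ \frac{r(n-1-r)}2\Big\}.$$ Consequently, for $r\in\{0,1,2,n-5,n-4,n-3,n-2\}$ we have $\mathrm{ex}(p;T_n)=\frac{(n-2)p-r(n-1-r)}2$.
   Context: All graphs are finite simple graphs; $\Delta(G)$ is the maximum degree of $G$. For a graph $L$, $\mathrm{ex}(p;L)$ is the maximum number of edges in a graph on $p$ vertices containing no subgraph isomorphic to $L$, and $\mathrm{Ex}(p;L)$ is the set of graphs on $p$ vertices containing no copy of $L$ and having exactly $\mathrm{ex}(p;L)$ edges. *)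

theory Defs
  imports Complex_Main
begin

definition simple_graph :: "'a set \<Rightarrow> 'a set set \<Rightarrow> bool" where
  "simple_graph V E \<longleftrightarrow> finite V \<and>
     (\<forall>e\<in>E. \<exists>x y. x \<in> V \<and> y \<in> V \<and> x \<noteq> y \<and> e = {x, y})"

definition degree :: "'a set \<Rightarrow> 'a set set \<Rightarrow> 'a \<Rightarrow> nat" where
  "degree V E v = card {u \<in> V. {u, v} \<in> E}"

definition max_degree :: "'a set \<Rightarrow> 'a set set \<Rightarrow> nat" where
  "max_degree V E = Max (degree V E ` V)"

definition connected_graph :: "'a set \<Rightarrow> 'a set set \<Rightarrow> bool" where
  "connected_graph V E \<longleftrightarrow> V \<noteq> {} \<and>
     (\<forall>u\<in>V. \<forall>v\<in>V. (\<lambda>x y. {x, y} \<in> E)\<^sup>*\<^sup>* u v)"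

definition is_tree :: "'a set \<Rightarrow> 'a set set \<Rightarrow> bool" where
  "is_tree V E \<longleftrightarrow> simple_graph V E \<and> connected_graph V E \<and> card E = card V - 1"

definition contains_copy :: "'a set \<Rightarrow> 'a set set \<Rightarrow> 'b set \<Rightarrow> 'b set set \<Rightarrow> bool" where
  "contains_copy V E VL EL \<longleftrightarrow>
     (\<exists>f. inj_on f VL \<and> f ` VL \<subseteq> V \<and> (\<forall>e\<in>EL. f ` e \<in> E))"

text \<open>Graphs on p vertices are taken (up to isomorphism) with vertex set {0..<p}.\<close>
definition L_free_graphs :: "nat \<Rightarrow> 'b set \<Rightarrow> 'b set set \<Rightarrow> nat set set set" where
  "L_free_graphs p VL EL =
     {E. simple_graph {0..<p} E \<and> \<not> contains_copy {0..<p} E VL EL}"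

definition ex :: "nat \<Rightarrow> 'b set \<Rightarrow> 'b set set \<Rightarrow> nat" where
  "ex p VL EL = Max (card ` L_free_graphs p VL EL)"

definition Ex :: "nat \<Rightarrow> 'b set \<Rightarrow> 'b set set \<Rightarrow> nat set set set" where
  "Ex p VL EL = {E \<in> L_free_graphs p VL EL. card E = ex p VL EL}"

end

theory Submission
  imports Defs
begin


lemma sg_finite_E: "simple_graph V E \<Longrightarrow> finite E"
proof -
  assume s: "simple_graph V E"
  have "E \<subseteq> Pow V" using s unfolding simple_graph_def by fastforce
  moreover have "finite V" using s unfolding simple_graph_def by simp
  ultimately show ?thesis by (meson finite_Pow_iff finite_subset)
qed

lemma sg_edgeE:
  assumes "simple_graph V E" "e \<in> E"
  obtains a b where "a \<in> V" "b \<in> V" "a \<noteq> b" "e = {a,b}"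
  using assms unfolding simple_graph_def by auto

lemma sg_fin: "simple_graph V E \<Longrightarrow> finite V" unfolding simple_graph_def by simp

lemma sg_adj: "simple_graph V E \<Longrightarrow> {x,y} \<in> E \<Longrightarrow> x \<in> V \<and> y \<in> V \<and> x \<noteq> y"
proof -
  assume s: "simple_graph V E" and e: "{x,y} \<in> E"
  then obtain a b where "a \<in> V" "b \<in> V" "a \<noteq> b" "{x,y} = {a,b}" by (rule sg_edgeE)
  then show ?thesis by (auto simp: doubleton_eq_iff)
qed

lemma deg_alt:
  assumes s: "simple_graph V E" shows "degree V E v = card {e\<in>E. v\<in>e}"
proof -
  have "bij_betw (\<lambda>u. {u,v}) {u\<in>V. {u,v}\<in>E} {e\<in>E. v\<in>e}"
  proof (rule bij_betwI')
    fix x y assume "x \<in> {u\<in>V. {u,v}\<in>E}" "y \<in> {u\<in>V. {u,v}\<in>E}"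
    then show "({x, v} = {y, v}) = (x = y)" using sg_adj[OF s] by (metis doubleton_eq_iff mem_Collect_eq)
  next
    fix x assume "x \<in> {u\<in>V. {u,v}\<in>E}" then show "{x,v} \<in> {e\<in>E. v\<in>e}" by auto
  next
    fix e assume e: "e \<in> {e\<in>E. v\<in>e}"
    then obtain a b where ab: "a\<in>V" "b\<in>V" "a\<noteq>b" "e={a,b}" using sg_edgeE[OF s, of e] by auto
    show "\<exists>x\<in>{u\<in>V. {u,v}\<in>E}. e = {x, v}"
    proof (cases "v = a")
      case True then show ?thesis using ab e by (auto intro!: bexI[of _ b] simp: insert_commute)
    next
      case False then have "v = b" using ab e by auto
      then show ?thesis using ab e by (auto intro!: bexI[of _ a])
    qed
  qed
  then show ?thesis unfolding degree_def by (rule bij_betw_same_card)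
qed

lemma handshake:
  assumes s: "simple_graph V E" shows "(\<Sum>v\<in>V. degree V E v) = 2 * card E"
proof -
  have fV: "finite V" using s by (rule sg_fin)
  have fE: "finite E" using sg_finite_E[OF s] .
  have "(\<Sum>v\<in>V. degree V E v) = (\<Sum>v\<in>V. \<Sum>e\<in>E. if v \<in> e then 1 else 0)"
    using deg_alt[OF s] fE by (simp add: sum.If_cases Int_def)
  also have "\<dots> = (\<Sum>e\<in>E. \<Sum>v\<in>V. if v \<in> e then 1 else 0)" by (rule sum.swap)
  also have "\<dots> = (\<Sum>e\<in>E. 2)"
  proof (rule sum.cong[OF refl])
    fix e assume "e \<in> E"
    then obtain a b where ab: "a\<in>V" "b\<in>V" "a\<noteq>b" "e={a,b}" using sg_edgeE[OF s, of e] by auto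
    have "(\<Sum>v\<in>V. if v \<in> e then 1 else 0) = card (V \<inter> e)" using fV by (simp add: sum.If_cases Int_def)
    also have "V \<inter> e = {a,b}" using ab by auto
    finally show "(\<Sum>v\<in>V. if v \<in> e then 1 else 0) = (2::nat)" using ab by simp
  qed
  finally show ?thesis by simp
qed



lemma div_block_iff:
  fixes N u b :: nat assumes "N > 0"
  shows "u div N = b \<longleftrightarrow> b*N \<le> u \<and> u < b*N+N"
proof
  assume h: "u div N = b"
  have "b*N \<le> u" using h less_eq_div_iff_mult_less_eq[OF assms, of b u] by simp
  moreover have "u < (b+1)*N" using h div_less_iff_less_mult[OF assms, of u "b+1"] by simp
  ultimately show "b*N \<le> u \<and> u < b*N+N" by simp
next
  assume "b*N \<le> u \<and> u < b*N+N"
  then show "u div N = b" by (intro div_nat_eqI) (auto simp: mult.commute)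
qed

definition blk :: "nat \<Rightarrow> nat \<Rightarrow> nat set set" where
  "blk N p = {e. \<exists>x y. x<p \<and> y<p \<and> x\<noteq>y \<and> x div N = y div N \<and> e={x,y}}"

lemma blk_sg: "simple_graph {0..<p} (blk N p)"
  unfolding simple_graph_def blk_def by auto

lemma blk_adj: "{u,v} \<in> blk N p \<longleftrightarrow> u<p \<and> v<p \<and> u\<noteq>v \<and> u div N = v div N"
proof
  assume "{u,v} \<in> blk N p"
  then obtain x y where "x<p" "y<p" "x\<noteq>y" "x div N = y div N" "{u,v}={x,y}" unfolding blk_def by auto
  then show "u<p \<and> v<p \<and> u\<noteq>v \<and> u div N = v div N" by (auto simp: doubleton_eq_iff)
next
  assume "u<p \<and> v<p \<and> u\<noteq>v \<and> u div N = v div N"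
  then show "{u,v} \<in> blk N p" unfolding blk_def by auto
qed

lemma tree_path_inv:
  assumes conn: "connected_graph VT ET" and w: "w \<in> VT" and u: "u \<in> VT"
    and step: "\<And>x y. {x,y} \<in> ET \<Longrightarrow> (P x \<longleftrightarrow> P y)"
  shows "P u \<longleftrightarrow> P w"
proof -
  have "(\<lambda>x y. {x, y} \<in> ET)\<^sup>*\<^sup>* w u" using conn w u unfolding connected_graph_def by auto
  then show ?thesis
  proof (induction rule: rtranclp_induct)
    case base then show ?case by simp
  next
    case (step y z) then show ?case using assms(4)[of y z] by simp
  qed
qed

lemma blk_free:
  assumes N: "N > 0" and tr: "is_tree VT ET" and cV: "card VT > N"
  shows "\<not> contains_copy {0..<p} (blk N p) VT ET"
proof
  assume "contains_copy {0..<p} (blk N p) VT ET"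
  then obtain f where inj: "inj_on f VT" and im: "f ` VT \<subseteq> {0..<p}" and ed: "\<forall>e\<in>ET. f ` e \<in> blk N p"
    unfolding contains_copy_def by blast
  have conn: "connected_graph VT ET" and sg: "simple_graph VT ET" using tr unfolding is_tree_def by auto
  obtain w where w: "w \<in> VT" using conn unfolding connected_graph_def by auto
  define b where "b = f w div N"
  have "\<forall>u\<in>VT. f u div N = b"
  proof
    fix u assume "u \<in> VT"
    have "(f u div N = b) \<longleftrightarrow> (f w div N = b)"
    proof (rule tree_path_inv[OF conn w \<open>u\<in>VT\<close>])
      fix x y assume "{x,y} \<in> ET"
      then have "{f x, f y} \<in> blk N p" using ed by force
      then show "(f x div N = b) \<longleftrightarrow> (f y div N = b)" using blk_adj by metis
    qed
    then show "f u div N = b" by (simp add: b_def)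
  qed
  then have "f ` VT \<subseteq> {b*N..<b*N+N}" using div_block_iff[OF N] by auto
  then have "card (f ` VT) \<le> N" using card_mono[of "{b*N..<b*N+N}"] by fastforce
  moreover have "card (f ` VT) = card VT" using card_image[OF inj] .
  ultimately show False using cV by simp
qed

lemma blk_degree:
  assumes N: "N > 0" and p: "p = k*N + r" and r: "r < N" and v: "v < p"
  shows "degree {0..<p} (blk N p) v = (if v < k*N then N-1 else r-1)"
proof -
  have d: "degree {0..<p} (blk N p) v = card ({u. u<p \<and> u div N = v div N} - {v})"
    unfolding degree_def using v blk_adj[of _ v N p]
    by (intro arg_cong[where f=card]) auto
  show ?thesis
  proof (cases "v < k*N")
    case True
    define b where "b = v div N"
    have "b < k" using True div_less_iff_less_mult[OF N, of v k] by (simp add: b_def)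
    then have "b*N + N \<le> k*N" by (metis Suc_leI add.commute mult_Suc mult_le_mono1)
    then have "{u. u<p \<and> u div N = b} = {b*N..<b*N+N}" using div_block_iff[OF N] p by auto
    moreover have "v \<in> {b*N..<b*N+N}" using div_block_iff[OF N] b_def by auto
    ultimately show ?thesis using d True by (simp add: b_def)
  next
    case False
    have "v div N = k" using False v p r div_block_iff[OF N, of v k] by auto
    moreover have "{u. u<p \<and> u div N = k} = {k*N..<p}" using div_block_iff[OF N] p r by auto
    moreover have "v \<in> {k*N..<p}" using False v by auto
    ultimately show ?thesis using d False p by simp
  qed
qed

lemma blk_card:
  assumes N: "N > 0" and p: "p = k*N + r" and r: "r < N"
  shows "2 * card (blk N p) = k*N*(N-1) + r*(r-1)"
proof -
  have "2 * card (blk N p) = (\<Sum>v\<in>{0..<p}. degree {0..<p} (blk N p) v)"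
    using handshake[OF blk_sg] by simp
  also have "\<dots> = (\<Sum>v\<in>{0..<p}. (if v < k*N then N-1 else r-1))"
    using blk_degree[OF N p r] by simp
  also have "{0..<p} = {0..<k*N} \<union> {k*N..<p}" using p by auto
  also have "(\<Sum>v\<in>{0..<k*N} \<union> {k*N..<p}. (if v < k*N then N-1 else r-1)) =
     (\<Sum>v\<in>{0..<k*N}. (if v < k*N then N-1 else r-1)) + (\<Sum>v\<in>{k*N..<p}. (if v < k*N then N-1 else r-1))"
    by (rule sum.union_disjoint) auto
  also have "(\<Sum>v\<in>{0..<k*N}. (if v < k*N then N-1 else r-1)) = k*N*(N-1)" by simp
  also have "(\<Sum>v\<in>{k*N..<p}. (if v < k*N then N-1 else r-1)) = r*(r-1)" using p by simp
  finally show ?thesis .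
qed



lemma sg_Pow: "simple_graph V E \<Longrightarrow> E \<subseteq> Pow V"
  unfolding simple_graph_def by fastforce

lemma Lfree_finite: "finite (L_free_graphs p VL EL)"
proof (rule finite_subset)
  show "L_free_graphs p VL EL \<subseteq> Pow (Pow {0..<p})" unfolding L_free_graphs_def using sg_Pow by auto
qed simp

lemma Lfree_empty: "EL \<noteq> {} \<Longrightarrow> {} \<in> L_free_graphs p VL EL"
  unfolding L_free_graphs_def contains_copy_def simple_graph_def by auto

lemma ex_ge: "E \<in> L_free_graphs p VL EL \<Longrightarrow> card E \<le> ex p VL EL"
  unfolding ex_def using Lfree_finite by (intro Max_ge) auto

lemma ex_in: "EL \<noteq> {} \<Longrightarrow> \<exists>E\<in>L_free_graphs p VL EL. card E = ex p VL EL"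
proof -
  assume "EL \<noteq> {}"
  then have "L_free_graphs p VL EL \<noteq> {}" using Lfree_empty by blast
  then have "ex p VL EL \<in> card ` L_free_graphs p VL EL" unfolding ex_def using Lfree_finite
    by (intro Max_in) auto
  then show ?thesis by auto
qed

definition gcomp :: "'a set set \<Rightarrow> 'a \<Rightarrow> 'a set" where
  "gcomp E v = {u. (\<lambda>x y. {x,y} \<in> E)\<^sup>*\<^sup>* v u}"

lemma rt_sym:
  assumes "(\<lambda>x y. {x,y} \<in> E)\<^sup>*\<^sup>* x y" shows "(\<lambda>x y. {x,y} \<in> E)\<^sup>*\<^sup>* y x"
  using assms
proof (induction rule: rtranclp_induct)
  case base then show ?case by simp
next
  case (step y z)
  then have "{z,y} \<in> E" by (simp add: insert_commute)
  then show ?case using step(3) by (rule converse_rtranclp_into_rtranclp)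
qed

lemma comp_self: "v \<in> gcomp E v" by (simp add: gcomp_def)

lemma comp_closed: "x \<in> gcomp E v \<Longrightarrow> {x,y} \<in> E \<Longrightarrow> y \<in> gcomp E v"
  unfolding gcomp_def by (auto intro: rtranclp.rtrancl_into_rtrancl)

lemma comp_same: assumes "u \<in> gcomp E v" shows "gcomp E u = gcomp E v"
proof -
  have uv: "(\<lambda>x y. {x,y} \<in> E)\<^sup>*\<^sup>* v u" using assms by (simp add: gcomp_def)
  have vu: "(\<lambda>x y. {x,y} \<in> E)\<^sup>*\<^sup>* u v" using rt_sym[OF uv] .
  show ?thesis unfolding gcomp_def using uv vu by (auto intro: rtranclp_trans)
qed

lemma comp_sub: assumes sg: "simple_graph V E" and v: "v \<in> V" shows "gcomp E v \<subseteq> V"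
proof
  fix u assume "u \<in> gcomp E v"
  then have "(\<lambda>x y. {x,y} \<in> E)\<^sup>*\<^sup>* v u" by (simp add: gcomp_def)
  then show "u \<in> V"
  proof (induction rule: rtranclp_induct)
    case base then show ?case using v by simp
  next
    case (step y z) then show ?case using sg_adj[OF sg] by blast
  qed
qed

lemma comp_finite: "simple_graph V E \<Longrightarrow> v \<in> V \<Longrightarrow> finite (gcomp E v)"
  using comp_sub sg_fin finite_subset by metis

lemma deg_small:
  assumes sg: "simple_graph V E" and v: "v \<in> V"
  shows "degree V E v \<le> card (gcomp E v) - 1"
proof -
  have "{u\<in>V. {u,v}\<in>E} \<subseteq> gcomp E v - {v}"
  proof
    fix u assume u: "u \<in> {u\<in>V. {u,v}\<in>E}"
    then have "{v,u} \<in> E" by (simp add: insert_commute)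
    then have "u \<in> gcomp E v" using comp_closed comp_self by metis
    moreover have "u \<noteq> v" using u sg_adj[OF sg] by blast
    ultimately show "u \<in> gcomp E v - {v}" by simp
  qed
  then have "degree V E v \<le> card (gcomp E v - {v})" unfolding degree_def
    using comp_finite[OF sg v] by (intro card_mono) auto
  then show ?thesis using comp_self[of v E] comp_finite[OF sg v] by simp
qed



lemma big_comp:
  fixes VT :: "'a set" and ET :: "'a set set" and E :: "nat set set"
  assumes tr: "is_tree VT ET" and cV: "card VT = n" and n: "n \<ge> 10"
    and hyp: "\<And>m H. m \<ge> n \<Longrightarrow> H \<in> Ex m VT ET \<Longrightarrow> connected_graph {0..<m} H
            \<Longrightarrow> max_degree {0..<m} H \<le> n - 4"
    and E: "E \<in> Ex p VT ET" and v: "v < p" and big: "card (gcomp E v) \<ge> n"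
  shows "degree {0..<p} E v \<le> n - 4"
proof -
  have sgE: "simple_graph {0..<p} E" and freeE: "\<not> contains_copy {0..<p} E VT ET"
    and cardE: "card E = ex p VT ET"
    using E unfolding Ex_def L_free_graphs_def by auto
  have conn: "connected_graph VT ET" and sgT: "simple_graph VT ET" and cET: "card ET = card VT - 1"
    using tr unfolding is_tree_def by auto
  have ETne: "ET \<noteq> {}" using cET cV n by auto
  have fE: "finite E" using sg_finite_E[OF sgE] .
  define C where "C = gcomp E v"
  define m where "m = card C"
  have vV: "v \<in> {0..<p}" using v by simp
  have CV: "C \<subseteq> {0..<p}" unfolding C_def using comp_sub[OF sgE vV] .
  have fC: "finite C" unfolding C_def using comp_finite[OF sgE vV] .
  have vC: "v \<in> C" unfolding C_def by (rule comp_self)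
  have mn: "m \<ge> n" using big by (simp add: m_def C_def)
  have Ccl: "\<And>x y. x \<in> C \<Longrightarrow> {x,y} \<in> E \<Longrightarrow> y \<in> C" unfolding C_def by (rule comp_closed)
  obtain \<psi> where psi: "bij_betw \<psi> {0..<m} C" using ex_bij_betw_nat_finite[OF fC] by (auto simp: m_def)
  define \<phi> where "\<phi> = inv_into {0..<m} \<psi>"
  have phi: "bij_betw \<phi> C {0..<m}" unfolding \<phi>_def using bij_betw_inv_into[OF psi] .
  have psiphi: "\<And>x. x \<in> C \<Longrightarrow> \<psi> (\<phi> x) = x" unfolding \<phi>_def using bij_betw_inv_into_right[OF psi] .
  have phipsi: "\<And>i. i \<in> {0..<m} \<Longrightarrow> \<phi> (\<psi> i) = i" unfolding \<phi>_def using bij_betw_inv_into_left[OF psi] .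
  have psiC: "\<And>i. i \<in> {0..<m} \<Longrightarrow> \<psi> i \<in> C" using psi bij_betwE by blast
  have phiC: "\<And>x. x \<in> C \<Longrightarrow> \<phi> x \<in> {0..<m}" using phi bij_betwE by blast
  have injpsi: "inj_on \<psi> {0..<m}" using psi bij_betw_def by blast
  have injphi: "inj_on \<phi> C" using phi bij_betw_def by blast
  have phipsi_set: "\<And>e. e \<subseteq> {0..<m} \<Longrightarrow> \<phi> ` \<psi> ` e = e"
    using phipsi by (force simp: image_image)
  have psiphi_set: "\<And>e. e \<subseteq> C \<Longrightarrow> \<psi> ` \<phi> ` e = e"
    using psiphi by (force simp: image_image)
  define H where "H = {e. e \<subseteq> {0..<m} \<and> \<psi> ` e \<in> E}"
  define EC where "EC = {e\<in>E. e \<subseteq> C}"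
  have sgH: "simple_graph {0..<m} H"
    unfolding simple_graph_def
  proof (intro conjI ballI)
    show "finite {0..<m}" by simp
  next
    fix e assume "e \<in> H"
    then have e: "e \<subseteq> {0..<m}" "\<psi> ` e \<in> E" by (auto simp: H_def)
    obtain a b where ab: "a \<in> {0..<p}" "b \<in> {0..<p}" "a \<noteq> b" "\<psi> ` e = {a,b}"
      using sg_edgeE[OF sgE e(2)] by metis
    have "\<psi> ` e \<subseteq> C" using e(1) psiC by auto
    then have abC: "a \<in> C" "b \<in> C" using ab(4) by auto
    have "e = {\<phi> a, \<phi> b}" using phipsi_set[OF e(1)] ab(4) by simp
    moreover have "\<phi> a \<noteq> \<phi> b" using injphi abC ab(3) inj_on_eq_iff by metis
    ultimately show "\<exists>x y. x \<in> {0..<m} \<and> y \<in> {0..<m} \<and> x \<noteq> y \<and> e = {x, y}"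
      using phiC abC by blast
  qed
  have freeH: "\<not> contains_copy {0..<m} H VT ET"
  proof
    assume "contains_copy {0..<m} H VT ET"
    then obtain f where inj: "inj_on f VT" and im: "f ` VT \<subseteq> {0..<m}" and ed: "\<forall>e\<in>ET. f ` e \<in> H"
      unfolding contains_copy_def by blast
    have "inj_on (\<psi> \<circ> f) VT" using inj im injpsi by (meson comp_inj_on inj_on_subset)
    moreover have "(\<psi> \<circ> f) ` VT \<subseteq> {0..<p}" using im psiC CV by (force simp: image_subset_iff)
    moreover have "\<forall>e\<in>ET. (\<psi> \<circ> f) ` e \<in> E" using ed by (auto simp: H_def image_comp)
    ultimately have "contains_copy {0..<p} E VT ET" unfolding contains_copy_def by blast
    then show False using freeE by simp
  qed
  have HL: "H \<in> L_free_graphs m VT ET" unfolding L_free_graphs_def using sgH freeH by simp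
  have cardH: "card H = card EC"
  proof (rule bij_betw_same_card[of "\<lambda>e. \<psi> ` e"], rule bij_betwI')
    fix x y assume "x \<in> H" "y \<in> H"
    then show "(\<psi> ` x = \<psi> ` y) = (x = y)" using inj_on_image_eq_iff[OF injpsi] by (auto simp: H_def)
  next
    fix x assume "x \<in> H" then show "\<psi> ` x \<in> EC" using psiC by (auto simp: H_def EC_def)
  next
    fix y assume y: "y \<in> EC"
    then have "\<phi> ` y \<subseteq> {0..<m}" "\<psi> ` \<phi> ` y = y" using phiC psiphi_set by (auto simp: EC_def)
    moreover have "y \<in> E" using y by (simp add: EC_def)
    ultimately have "\<phi> ` y \<in> H" by (simp add: H_def)
    then show "\<exists>x\<in>H. y = \<psi> ` x" using \<open>\<psi> ` \<phi> ` y = y\<close> by metis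
  qed
  have outC: "\<And>e. e \<in> E \<Longrightarrow> \<not> e \<subseteq> C \<Longrightarrow> e \<inter> C = {}"
  proof -
    fix e assume e: "e \<in> E" "\<not> e \<subseteq> C"
    obtain a b where ab: "e = {a,b}" using sg_edgeE[OF sgE e(1)] by metis
    have "{b,a} \<in> E" using e(1) ab by (simp add: insert_commute)
    then show "e \<inter> C = {}" using e ab Ccl by auto
  qed
  have exm: "ex m VT ET \<le> card H"
  proof -
    obtain H' where H': "H' \<in> L_free_graphs m VT ET" "card H' = ex m VT ET" using ex_in[OF ETne] by blast
    have sgH': "simple_graph {0..<m} H'" and freeH': "\<not> contains_copy {0..<m} H' VT ET"
      using H'(1) unfolding L_free_graphs_def by auto
    have fH': "finite H'" using sg_finite_E[OF sgH'] .
    have H'sub: "\<And>h. h \<in> H' \<Longrightarrow> h \<subseteq> {0..<m}" using sg_Pow[OF sgH'] by auto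
    define E' where "E' = (E - EC) \<union> (\<lambda>e. \<psi> ` e) ` H'"
    have E'cases: "\<And>e. e \<in> E' \<Longrightarrow> (e \<in> E \<and> e \<inter> C = {}) \<or> (\<exists>h\<in>H'. e = \<psi> ` h)"
      using outC unfolding E'_def EC_def by auto
    have sgE': "simple_graph {0..<p} E'"
      unfolding simple_graph_def
    proof (intro conjI ballI)
      show "finite {0..<p}" by simp
    next
      fix e assume "e \<in> E'"
      then consider "e \<in> E" | h where "h \<in> H'" "e = \<psi> ` h" unfolding E'_def by auto
      then show "\<exists>x y. x \<in> {0..<p} \<and> y \<in> {0..<p} \<and> x \<noteq> y \<and> e = {x, y}"
      proof cases
        case 1 then show ?thesis using sgE unfolding simple_graph_def by auto
      next
        case 2
        obtain a b where ab: "a \<in> {0..<m}" "b \<in> {0..<m}" "a \<noteq> b" "h = {a,b}"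
          using sg_edgeE[OF sgH' 2(1)] by metis
        have "\<psi> a \<noteq> \<psi> b" using injpsi ab inj_on_eq_iff by metis
        moreover have "\<psi> a \<in> {0..<p}" "\<psi> b \<in> {0..<p}" using psiC[OF ab(1)] psiC[OF ab(2)] CV by auto
        ultimately show ?thesis using 2 ab by auto
      qed
    qed
    have freeE': "\<not> contains_copy {0..<p} E' VT ET"
    proof
      assume "contains_copy {0..<p} E' VT ET"
      then obtain f where inj: "inj_on f VT" and im: "f ` VT \<subseteq> {0..<p}" and ed: "\<forall>e\<in>ET. f ` e \<in> E'"
        unfolding contains_copy_def by blast
      obtain w where w: "w \<in> VT" using conn unfolding connected_graph_def by auto
      have same: "\<And>u. u \<in> VT \<Longrightarrow> (f u \<in> C \<longleftrightarrow> f w \<in> C)"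
      proof (rule tree_path_inv[OF conn w])
        fix u assume "u \<in> VT" then show "u \<in> VT" .
      next
        fix x y assume "{x,y} \<in> ET"
        then have "{f x, f y} \<in> E'" using ed by force
        then have "({f x, f y} \<in> E \<and> {f x, f y} \<inter> C = {}) \<or> (\<exists>h\<in>H'. {f x, f y} = \<psi> ` h)"
          using E'cases by blast
        then show "(f x \<in> C) = (f y \<in> C)"
        proof
          assume "{f x, f y} \<in> E \<and> {f x, f y} \<inter> C = {}" then show ?thesis by auto
        next
          assume "\<exists>h\<in>H'. {f x, f y} = \<psi> ` h"
          then obtain h where h: "h \<in> H'" "{f x, f y} = \<psi> ` h" by blast
          have "\<psi> ` h \<subseteq> C" using H'sub[OF h(1)] psiC by auto
          then have "{f x, f y} \<subseteq> C" using h(2) by simp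
          then show ?thesis by simp
        qed
      qed
      show False
      proof (cases "f w \<in> C")
        case True
        then have fC: "f ` VT \<subseteq> C" using same by blast
        have "inj_on (\<phi> \<circ> f) VT" using inj fC injphi by (meson comp_inj_on inj_on_subset)
        moreover have "(\<phi> \<circ> f) ` VT \<subseteq> {0..<m}" using fC phiC by (auto simp: image_subset_iff)
        moreover have "\<forall>e\<in>ET. (\<phi> \<circ> f) ` e \<in> H'"
        proof
          fix e assume e: "e \<in> ET"
          then have eVT: "e \<subseteq> VT" using sg_Pow[OF sgT] by auto
          have fe: "f ` e \<subseteq> C" using eVT fC by auto
          obtain a0 b0 where "e = {a0,b0}" using sg_edgeE[OF sgT e] by metis
          then have ene: "e \<noteq> {}" by simp
          have "f ` e \<in> E'" using ed e by blast
          then have "(f ` e \<in> E \<and> f ` e \<inter> C = {}) \<or> (\<exists>h\<in>H'. f ` e = \<psi> ` h)" using E'cases by blast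
          moreover have "f ` e \<inter> C \<noteq> {}" using fe ene by auto
          ultimately obtain h where h: "h \<in> H'" "f ` e = \<psi> ` h" by blast
          have "(\<phi> \<circ> f) ` e = \<phi> ` \<psi> ` h" by (simp add: image_image h(2)[symmetric])
          also have "\<dots> = h" using phipsi_set[OF H'sub[OF h(1)]] .
          finally show "(\<phi> \<circ> f) ` e \<in> H'" using h(1) by simp
        qed
        ultimately have "contains_copy {0..<m} H' VT ET" unfolding contains_copy_def by blast
        then show False using freeH' by simp
      next
        case False
        then have fC: "\<forall>u\<in>VT. f u \<notin> C" using same by blast
        have "\<forall>e\<in>ET. f ` e \<in> E"
        proof
          fix e assume e: "e \<in> ET"
          then have eVT: "e \<subseteq> VT" using sg_Pow[OF sgT] by auto
          obtain a b0 where "e = {a,b0}" using sg_edgeE[OF sgT e] by metis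
          then have a: "a \<in> e" by simp
          have "f ` e \<in> E'" using ed e by blast
          then have "(f ` e \<in> E \<and> f ` e \<inter> C = {}) \<or> (\<exists>h\<in>H'. f ` e = \<psi> ` h)" using E'cases by blast
          moreover have "\<not> (\<exists>h\<in>H'. f ` e = \<psi> ` h)"
          proof
            assume "\<exists>h\<in>H'. f ` e = \<psi> ` h"
            then obtain h where h: "h \<in> H'" "f ` e = \<psi> ` h" by blast
            have "\<psi> ` h \<subseteq> C" using H'sub[OF h(1)] psiC by auto
            moreover have "f a \<in> f ` e" using a by simp
            ultimately have "f a \<in> C" using h(2) by blast
            then show False using fC a eVT by blast
          qed
          ultimately show "f ` e \<in> E" by blast
        qed
        then have "contains_copy {0..<p} E VT ET" unfolding contains_copy_def using inj im by blast
        then show False using freeE by simp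
      qed
    qed
    have "E' \<in> L_free_graphs p VT ET" unfolding L_free_graphs_def using sgE' freeE' by simp
    then have "card E' \<le> card E" using ex_ge cardE by metis
    moreover have "card E' = card (E - EC) + card H'"
    proof -
      have disj: "(E - EC) \<inter> (\<lambda>e. \<psi> ` e) ` H' = {}"
      proof (rule ccontr)
        assume "(E - EC) \<inter> (\<lambda>e. \<psi> ` e) ` H' \<noteq> {}"
        then obtain h where h: "h \<in> H'" "\<psi> ` h \<in> E - EC" by blast
        have "\<psi> ` h \<subseteq> C" using H'sub[OF h(1)] psiC by auto
        then show False using h(2) by (simp add: EC_def)
      qed
      have "card ((\<lambda>e. \<psi> ` e) ` H') = card H'"
      proof (intro card_image inj_onI)
        fix x y assume "x \<in> H'" "y \<in> H'" "\<psi> ` x = \<psi> ` y"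
        then show "x = y" using inj_on_image_eq_iff[OF injpsi H'sub H'sub] by metis
      qed
      moreover have "card E' = card (E - EC) + card ((\<lambda>e. \<psi> ` e) ` H')"
        unfolding E'_def using disj fE fH' by (intro card_Un_disjoint) auto
      ultimately show ?thesis by simp
    qed
    moreover have "card E = card (E - EC) + card EC"
    proof -
      have ECE: "EC \<subseteq> E" by (auto simp: EC_def)
      have fEC: "finite EC" using ECE fE finite_subset by auto
      show ?thesis using card_Diff_subset[OF fEC ECE] card_mono[OF fE ECE] by simp
    qed
    ultimately show ?thesis using H'(2) cardH by simp
  qed
  have HEx: "H \<in> Ex m VT ET" unfolding Ex_def using HL ex_ge[OF HL] exm by simp
  have pathmap: "\<And>x y. x \<in> C \<Longrightarrow> (\<lambda>x y. {x,y} \<in> E)\<^sup>*\<^sup>* x y \<Longrightarrow> (\<lambda>x y. {x,y} \<in> H)\<^sup>*\<^sup>* (\<phi> x) (\<phi> y) \<and> y \<in> C"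
  proof -
    fix x y assume x: "x \<in> C" and r: "(\<lambda>x y. {x,y} \<in> E)\<^sup>*\<^sup>* x y"
    from r show "(\<lambda>x y. {x,y} \<in> H)\<^sup>*\<^sup>* (\<phi> x) (\<phi> y) \<and> y \<in> C"
    proof (induction rule: rtranclp_induct)
      case base then show ?case using x by simp
    next
      case (step y z)
      have yC: "y \<in> C" using step.IH by simp
      have "{y,z} \<in> E" using step.hyps(2) by simp
      then have zC: "z \<in> C" using Ccl[OF yC] by blast
      have "{\<phi> y, \<phi> z} \<subseteq> {0..<m}" using yC zC phiC by auto
      moreover have "\<psi> ` {\<phi> y, \<phi> z} = {y,z}" using yC zC psiphi by simp
      ultimately have "{\<phi> y, \<phi> z} \<in> H" using step(2) by (simp add: H_def)
      then have "(\<lambda>x y. {x,y} \<in> H)\<^sup>*\<^sup>* (\<phi> x) (\<phi> z)"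
        using rtranclp.rtrancl_into_rtrancl[OF conjunct1[OF step.IH]] by simp
      then show ?case using zC by simp
    qed
  qed
  have connH: "connected_graph {0..<m} H"
    unfolding connected_graph_def
  proof (intro conjI ballI)
    show "{0..<m} \<noteq> {}" using mn n by simp
  next
    fix a b assume a: "a \<in> {0..<m}" and b: "b \<in> {0..<m}"
    have "\<psi> a \<in> gcomp E v" "\<psi> b \<in> gcomp E v" using psiC[OF a] psiC[OF b] by (simp_all add: C_def)
    then have h1: "(\<lambda>x y. {x,y} \<in> E)\<^sup>*\<^sup>* v (\<psi> a)" and h2: "(\<lambda>x y. {x,y} \<in> E)\<^sup>*\<^sup>* v (\<psi> b)"
      by (simp_all add: gcomp_def)
    have "(\<lambda>x y. {x,y} \<in> E)\<^sup>*\<^sup>* (\<psi> a) (\<psi> b)" using rtranclp_trans[OF rt_sym[OF h1] h2] .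
    then have "(\<lambda>x y. {x,y} \<in> H)\<^sup>*\<^sup>* (\<phi> (\<psi> a)) (\<phi> (\<psi> b))" using pathmap[OF psiC[OF a]] by blast
    then show "(\<lambda>x y. {x,y} \<in> H)\<^sup>*\<^sup>* a b" using phipsi a b by simp
  qed
  have md: "max_degree {0..<m} H \<le> n - 4" using hyp[OF mn HEx connH] .
  have "degree {0..<m} H (\<phi> v) \<le> max_degree {0..<m} H"
    unfolding max_degree_def using phiC[OF vC] by (intro Max_ge) auto
  moreover have "degree {0..<p} E v \<le> degree {0..<m} H (\<phi> v)"
    unfolding degree_def
  proof (rule card_inj_on_le[of \<phi>])
    show "inj_on \<phi> {u \<in> {0..<p}. {u, v} \<in> E}"
    proof (rule inj_on_subset[OF injphi], rule subsetI)
      fix u assume "u \<in> {u \<in> {0..<p}. {u, v} \<in> E}"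
      then have "{v,u} \<in> E" by (simp add: insert_commute)
      then show "u \<in> C" using Ccl[OF vC] by blast
    qed
  next
    show "\<phi> ` {u \<in> {0..<p}. {u, v} \<in> E} \<subseteq> {u \<in> {0..<m}. {u, \<phi> v} \<in> H}"
    proof
      fix i assume "i \<in> \<phi> ` {u \<in> {0..<p}. {u, v} \<in> E}"
      then obtain u where u: "u < p" "{u,v} \<in> E" "i = \<phi> u" by auto
      have uC: "u \<in> C" using Ccl[OF vC, of u] u(2) by (simp add: insert_commute)
      have "{\<phi> u, \<phi> v} \<subseteq> {0..<m}" using uC vC phiC by auto
      moreover have "\<psi> ` {\<phi> u, \<phi> v} = {u,v}" using uC vC psiphi by simp
      ultimately show "i \<in> {u \<in> {0..<m}. {u, \<phi> v} \<in> H}" using u uC phiC by (auto simp: H_def)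
    qed
  qed simp
  ultimately show ?thesis using md by simp
qed



definition f2 :: "nat \<Rightarrow> nat \<Rightarrow> int" where "f2 N y = int y * (int N - int y)"

lemma f2_sub:
  assumes "N > 0"
  shows "f2 N ((a+b) mod N) \<le> f2 N (a mod N) + f2 N (b mod N)"
proof -
  define x where "x = a mod N"
  define y where "y = b mod N"
  have x: "x < N" and y: "y < N" using assms by (auto simp: x_def y_def)
  have ab: "(a+b) mod N = (x+y) mod N" by (simp add: x_def y_def mod_add_eq)
  show ?thesis
  proof (cases "x + y < N")
    case True
    then have "(a+b) mod N = x + y" using ab by simp
    then have e: "f2 N ((a+b) mod N) = (int x + int y) * (int N - int x - int y)" by (simp add: f2_def)
    have e2: "(int x + int y) * (int N - int x - int y) = int x * (int N - int x) + int y * (int N - int y) - 2 * (int x * int y)"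
      by (simp add: algebra_simps)
    have "int x * int y \<ge> 0" by simp
    then show ?thesis using e e2 unfolding f2_def x_def[symmetric] y_def[symmetric] by linarith
  next
    case False
    then have "(x+y) mod N = x + y - N" using x y
      by (simp add: le_mod_geq)
    then have "(a+b) mod N = x + y - N" using ab by simp
    moreover have "int (x + y - N) = int x + int y - int N" using False by simp
    ultimately have e: "f2 N ((a+b) mod N) = (int x + int y - int N) * (2 * int N - int x - int y)" by (simp add: f2_def)
    have e2: "(int x + int y - int N) * (2 * int N - int x - int y) = int x * (int N - int x) + int y * (int N - int y) - 2 * ((int N - int x) * (int N - int y))"
      by (simp add: algebra_simps)
    have "(int N - int x) * (int N - int y) \<ge> 0" using x y by simp
    then show ?thesis using e e2 unfolding f2_def x_def[symmetric] y_def[symmetric] by linarith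
  qed
qed



lemma f2_sum:
  assumes "N > 0" "finite S"
  shows "f2 N ((\<Sum>x\<in>S. s x) mod N) \<le> (\<Sum>x\<in>S. f2 N (s x mod N))"
  using assms(2)
proof (induction S rule: finite_induct)
  case empty then show ?case by (simp add: f2_def)
next
  case (insert x F)
  have "f2 N ((\<Sum>x\<in>insert x F. s x) mod N) = f2 N ((s x + (\<Sum>x\<in>F. s x)) mod N)"
    using insert by simp
  also have "\<dots> \<le> f2 N (s x mod N) + f2 N ((\<Sum>x\<in>F. s x) mod N)"
    using f2_sub[OF assms(1), of "s x" "\<Sum>x\<in>F. s x"] by simp
  also have "\<dots> \<le> f2 N (s x mod N) + (\<Sum>x\<in>F. f2 N (s x mod N))" using insert by simp
  finally show ?case using insert by simp
qed

definition g :: "nat \<Rightarrow> nat \<Rightarrow> int" where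
  "g N m = (if m > N then 2 * int m else f2 N m)"

lemma comb:
  assumes N: "N \<ge> 2" and fin: "finite S" and pos: "\<forall>x\<in>S. s x \<ge> 1"
    and r: "(\<Sum>x\<in>S. s x) mod N = r"
  shows "min (2 * (int N + int r)) (int r * (int N - int r)) \<le> (\<Sum>x\<in>S. g N (s x))"
proof -
  have rN: "r < N" using r N by auto
  define Sb where "Sb = {x\<in>S. s x > N}"
  define Ss where "Ss = {x\<in>S. \<not> s x > N}"
  have fb: "finite Sb" "finite Ss" using fin by (auto simp: Sb_def Ss_def)
  have split: "S = Sb \<union> Ss" "Sb \<inter> Ss = {}" by (auto simp: Sb_def Ss_def)
  define B where "B = (\<Sum>x\<in>Sb. s x)"
  define T where "T = (\<Sum>x\<in>Ss. s x)"
  have BT: "(B + T) mod N = r" using r fb split unfolding B_def T_def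
    by (metis sum.union_disjoint)
  have gsum: "(\<Sum>x\<in>S. g N (s x)) = (\<Sum>x\<in>Sb. g N (s x)) + (\<Sum>x\<in>Ss. g N (s x))"
    using fb split by (metis sum.union_disjoint)
  have gb: "(\<Sum>x\<in>Sb. g N (s x)) = 2 * int B"
    unfolding B_def g_def Sb_def by (simp add: sum_distrib_left)
  have "(\<Sum>x\<in>Ss. g N (s x)) = (\<Sum>x\<in>Ss. f2 N (s x mod N))"
  proof (rule sum.cong[OF refl])
    fix x assume "x \<in> Ss"
    then have "s x \<le> N" by (auto simp: Ss_def)
    then show "g N (s x) = f2 N (s x mod N)"
      by (cases "s x = N") (auto simp: g_def f2_def)
  qed
  also have "\<dots> \<ge> f2 N (T mod N)" unfolding T_def using f2_sum[of N Ss s] N fb by simp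
  finally have gs: "(\<Sum>x\<in>Ss. g N (s x)) \<ge> f2 N (T mod N)" .
  have f2nn: "\<And>y. y \<le> N \<Longrightarrow> f2 N y \<ge> 0" by (simp add: f2_def)
  have tN: "T mod N < N" using N by simp
  show ?thesis
  proof (cases "Sb = {}")
    case True
    then have "B = 0" by (simp add: B_def)
    then have "T mod N = r" using BT by simp
    then show ?thesis using gsum gb gs by (simp add: f2_def)
  next
    case False
    then obtain x where "x \<in> Sb" by auto
    then have "B \<ge> s x" "s x > N" unfolding B_def using fb by (auto simp: Sb_def intro: member_le_sum)
    then have BN: "B > N" by simp
    show ?thesis
    proof (cases "B \<ge> N + r")
      case True
      have "f2 N (T mod N) \<ge> 0" using f2nn tN by simp
      moreover have "2*(int N + int r) \<le> 2 * int B" using True by simp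
      moreover have "min (2 * (int N + int r)) (int r * (int N - int r)) \<le> 2*(int N + int r)" by (rule min.cobounded1)
      ultimately show ?thesis using gsum gb gs by linarith
    next
      case False
      define u where "u = B - N"
      have u: "1 \<le> u" "u < r" "B = N + u" using False BN by (auto simp: u_def)
      have "(u + T) mod N = r" using BT u(3) by (simp add: add.assoc)
      then have "(u + T mod N) mod N = r" by (simp add: mod_add_right_eq)
      then have tm: "T mod N = r - u"
      proof -
        assume h: "(u + T mod N) mod N = r"
        show ?thesis
        proof (cases "u + T mod N < N")
          case True then show ?thesis using h by simp
        next
          case False
          have lt: "u + T mod N - N < N" using tN u rN by linarith
          have "(u + T mod N) mod N = u + T mod N - N" using False lt by (simp add: le_mod_geq)
          then show ?thesis using h tN u rN by linarith
        qed
      qed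
      have "f2 N (r - u) = int (r - u) * (int N - int (r - u))" by (simp add: f2_def)
      moreover have "int N - int (r - u) \<ge> 2" using u rN by simp
      moreover have "int (r-u) \<ge> 0" by simp
      ultimately have "f2 N (r - u) \<ge> 2 * int (r - u)"
        using mult_left_mono[of 2 "int N - int (r - u)" "int (r-u)"] by (simp add: mult.commute)
      then have h1: "f2 N (T mod N) \<ge> 2 * (int r - int u)" using tm u by simp
      have h2: "int B = int N + int u" using u by simp
      have "2*(int N + int r) \<le> 2 * int B + f2 N (T mod N)"
      proof -
        obtain F where F: "F = f2 N (T mod N)" by simp
        have "2*(int N + int r) \<le> 2 * int B + F" using h1 h2 unfolding F[symmetric] by arith
        then show ?thesis using F by simp
      qed
      also have "\<dots> \<le> 2 * int B + (\<Sum>x\<in>Ss. g N (s x))" using gs by simp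
      also have "\<dots> = (\<Sum>x\<in>S. g N (s x))" using gsum gb by simp
      finally have "(\<Sum>x\<in>S. g N (s x)) \<ge> 2*(int N + int r)" .
      then show ?thesis by (rule order.trans[OF min.cobounded1])
    qed
  qed
qed



lemma fin_arith:
  assumes "2*int e + min (2*(int N + int r)) (int r * (int N - int r)) \<le> int a * int p"
  shows "real e \<le> real a * real p / 2 - min (real N + real r) (real r * (real N - real r) / 2)"
proof (cases "2*(int N + int r) \<le> int r * (int N - int r)")
  case True
  then have "2*int e + 2*(int N + int r) \<le> int a * int p" using assms by simp
  then have "real_of_int (2*int e + 2*(int N + int r)) \<le> real_of_int (int a * int p)" by (simp only: of_int_le_iff)
  then have h: "2*real e + 2*(real N + real r) \<le> real a * real p" by simp
  have "real_of_int (2*(int N + int r)) \<le> real_of_int (int r * (int N - int r))" using True by (simp only: of_int_le_iff)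
  then have "2*(real N + real r) \<le> real r * (real N - real r)" by simp
  then have "min (real N + real r) (real r * (real N - real r) / 2) = real N + real r" by simp
  then show ?thesis using h by simp
next
  case False
  then have "2*int e + int r * (int N - int r) \<le> int a * int p" using assms by simp
  then have "real_of_int (2*int e + int r * (int N - int r)) \<le> real_of_int (int a * int p)" by (simp only: of_int_le_iff)
  then have h: "2*real e + real r * (real N - real r) \<le> real a * real p" by simp
  have "real_of_int (int r * (int N - int r)) < real_of_int (2*(int N + int r))" using False by (simp only: of_int_less_iff not_le)
  then have "real r * (real N - real r) < 2*(real N + real r)" by simp
  then have "min (real N + real r) (real r * (real N - real r) / 2) = real r * (real N - real r) / 2" by simp
  then show ?thesis using h by simp
qed

theorem lemma2p8:
  fixes n k r p :: nat and VT :: "'a set" and ET :: "'a set set"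
  assumes "n \<ge> 10"
    and "is_tree VT ET" and "card VT = n"
    and "max_degree VT ET = n - 4"
    and "\<And>m H. m \<ge> n \<Longrightarrow> H \<in> Ex m VT ET \<Longrightarrow> connected_graph {0..<m} H
            \<Longrightarrow> max_degree {0..<m} H \<le> n - 4"
    and "p = k * (n - 1) + r" and "r \<le> n - 2" and "p \<ge> n - 1"
  shows "(real (n - 2) * real p - real r * real (n - 1 - r)) / 2 \<le> real (ex p VT ET)
       \<and> real (ex p VT ET) \<le> real (n - 2) * real p / 2
            - min (real (n - 1 + r)) (real r * real (n - 1 - r) / 2)
       \<and> (r \<in> {0, 1, 2, n - 5, n - 4, n - 3, n - 2} \<longrightarrow>
            real (ex p VT ET) = (real (n - 2) * real p - real r * real (n - 1 - r)) / 2)"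
proof -
  note n = assms(1) and tr = assms(2) and cV = assms(3) and hyp = assms(5) and pk = assms(6) and rle = assms(7)
  define N where "N = n - 1"
  have N0: "N > 0" and rN: "r < N" using n rle by (auto simp: N_def)
  have pN: "p = k * N + r" using pk by (simp add: N_def)
  have cET: "card ET = card VT - 1" using tr unfolding is_tree_def by auto
  have ETne: "ET \<noteq> {}" using cET cV n by auto
  have low_nat: "k*N*(N-1) + r*(r-1) \<le> 2 * ex p VT ET"
  proof -
    have "blk N p \<in> L_free_graphs p VT ET" unfolding L_free_graphs_def
      using blk_sg blk_free[OF N0 tr] cV n by (auto simp: N_def)
    then have "card (blk N p) \<le> ex p VT ET" by (rule ex_ge)
    then show ?thesis using blk_card[OF N0 pN rN] by simp
  qed
  have rr: "real (r*(r-1)) = real r * real r - real r" by (cases r) (auto simp: algebra_simps)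
  have NN: "real (N*(N-1)) = real N * real N - real N" using N0 by (cases N) (auto simp: algebra_simps)
  have rN': "real (n - 1 - r) = real N - real r" using rN by (simp add: N_def of_nat_diff)
  have n2: "real (n - 2) = real N - 1" using n by (simp add: N_def of_nat_diff)
  have lower: "(real (n - 2) * real p - real r * real (n - 1 - r)) / 2 \<le> real (ex p VT ET)"
  proof -
    have "real (k*N*(N-1) + r*(r-1)) \<le> real (2 * ex p VT ET)" using low_nat by (simp only: of_nat_le_iff)
    then have "real k * (real N * real N - real N) + (real r * real r - real r) \<le> 2 * real (ex p VT ET)"
      using rr NN by (simp add: mult.assoc)
    moreover have "real (n - 2) * real p - real r * real (n - 1 - r) = real k * (real N * real N - real N) + (real r * real r - real r)"
      unfolding rN' n2 pN by (simp add: algebra_simps)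
    ultimately show ?thesis by simp
  qed
  obtain E where EL: "E \<in> L_free_graphs p VT ET" and cE: "card E = ex p VT ET" using ex_in[OF ETne] by blast
  have E: "E \<in> Ex p VT ET" using EL cE by (simp add: Ex_def)
  have sgE: "simple_graph {0..<p} E" using EL by (simp add: L_free_graphs_def)
  define V :: "nat set" where "V = {0..<p}"
  define D where "D = (\<lambda>v. int (n-2) - int (degree V E v))"
  define CS where "CS = gcomp E ` V"
  have fV: "finite V" by (simp add: V_def)
  have grp: "\<And>C. C \<in> CS \<Longrightarrow> {x\<in>V. gcomp E x = C} = C"
  proof -
    fix C assume "C \<in> CS"
    then obtain v where v: "v \<in> V" "C = gcomp E v" by (auto simp: CS_def)
    show "{x\<in>V. gcomp E x = C} = C"
    proof
      show "{x\<in>V. gcomp E x = C} \<subseteq> C"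
      proof
        fix x assume "x \<in> {x\<in>V. gcomp E x = C}"
        then have "gcomp E x = C" by simp
        then show "x \<in> C" using comp_self[of x E] by simp
      qed
      show "C \<subseteq> {x\<in>V. gcomp E x = C}"
      proof
        fix x assume x: "x \<in> C"
        have "gcomp E x = C" using comp_same[of x E v] x v(2) by simp
        moreover have "x \<in> V" using comp_sub[OF sgE[folded V_def] v(1)] x v(2) by blast
        ultimately show "x \<in> {x\<in>V. gcomp E x = C}" by simp
      qed
    qed
  qed
  have sumD: "(\<Sum>v\<in>V. D v) = (\<Sum>C\<in>CS. \<Sum>v\<in>C. D v)"
  proof -
    have "(\<Sum>v\<in>V. D v) = (\<Sum>y\<in>CS. \<Sum>x\<in>{x\<in>V. gcomp E x = y}. D x)"
      unfolding CS_def by (rule sum.image_gen[OF fV])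
    also have "\<dots> = (\<Sum>y\<in>CS. \<Sum>x\<in>y. D x)" by (rule sum.cong[OF refl]) (simp add: grp)
    finally show ?thesis .
  qed
  have sumC: "(\<Sum>C\<in>CS. card C) = p"
  proof -
    have "card V = (\<Sum>v\<in>V. 1::nat)" by simp
    also have "\<dots> = (\<Sum>C\<in>CS. \<Sum>v\<in>{x\<in>V. gcomp E x = C}. 1)" unfolding CS_def by (rule sum.image_gen[OF fV])
    also have "\<dots> = (\<Sum>C\<in>CS. card C)" by (rule sum.cong[OF refl]) (simp add: grp)
    finally show ?thesis by (simp add: V_def)
  qed
  have fCS: "finite CS" using fV by (simp add: CS_def)
  have Cpos: "\<forall>C\<in>CS. card C \<ge> 1"
  proof
    fix C assume "C \<in> CS"
    then obtain v where v: "v \<in> V" "C = gcomp E v" by (auto simp: CS_def)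
    then have "finite C" "v \<in> C" using comp_finite[OF sgE[folded V_def] v(1)] comp_self by auto
    then have "C \<noteq> {}" by blast
    then have "card C > 0" using \<open>finite C\<close> card_gt_0_iff by blast
    then show "card C \<ge> 1" by simp
  qed
  have compD: "\<And>C. C \<in> CS \<Longrightarrow> g N (card C) \<le> (\<Sum>v\<in>C. D v)"
  proof -
    fix C assume "C \<in> CS"
    then obtain v where v: "v \<in> V" "C = gcomp E v" by (auto simp: CS_def)
    have CV: "C \<subseteq> V" using comp_sub[OF sgE[folded V_def] v(1)] v(2) by simp
    have xC: "\<And>x. x \<in> C \<Longrightarrow> gcomp E x = C"
    proof -
      fix x assume "x \<in> C"
      then have "x \<in> gcomp E v" using v(2) by simp
      then show "gcomp E x = C" using comp_same[of x E v] v(2) by simp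
    qed
    show "g N (card C) \<le> (\<Sum>v\<in>C. D v)"
    proof (cases "card C > N")
      case True
      have "\<And>x. x \<in> C \<Longrightarrow> D x \<ge> 2"
      proof -
        fix x assume x: "x \<in> C"
        have xp: "x < p" using x CV by (auto simp: V_def)
        have cx: "card (gcomp E x) \<ge> n" using xC[OF x] True n by (simp add: N_def)
        have "degree {0..<p} E x \<le> n - 4"
          by (rule big_comp[OF tr cV n hyp E xp cx])
        then show "D x \<ge> 2" using n by (simp add: D_def V_def)
      qed
      then have "(\<Sum>v\<in>C. (2::int)) \<le> (\<Sum>v\<in>C. D v)" by (rule sum_mono)
      then show ?thesis using True by (simp add: g_def)
    next
      case False
      have "\<And>x. x \<in> C \<Longrightarrow> D x \<ge> int N - int (card C)"
      proof -
        fix x assume x: "x \<in> C"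
        have xV: "x \<in> V" using x CV by blast
        have "degree V E x \<le> card (gcomp E x) - 1" by (rule deg_small[OF sgE[folded V_def] xV])
        then have "degree V E x \<le> card C - 1" using xC[OF x] by simp
        moreover have "card C \<ge> 1" using Cpos \<open>C \<in> CS\<close> by blast
        ultimately show "D x \<ge> int N - int (card C)" using n by (simp add: D_def N_def)
      qed
      then have "(\<Sum>v\<in>C. int N - int (card C)) \<le> (\<Sum>v\<in>C. D v)" by (rule sum_mono)
      then show ?thesis using False by (simp add: g_def f2_def)
    qed
  qed
  have "min (2 * (int N + int r)) (int r * (int N - int r)) \<le> (\<Sum>C\<in>CS. g N (card C))"
  proof (rule comb[OF _ fCS Cpos])
    show "2 \<le> N" using n by (simp add: N_def)
    show "(\<Sum>C\<in>CS. card C) mod N = r" using sumC pN rN by simp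
  qed
  also have "\<dots> \<le> (\<Sum>C\<in>CS. \<Sum>v\<in>C. D v)" using compD by (rule sum_mono)
  also have "\<dots> = (\<Sum>v\<in>V. D v)" using sumD by simp
  also have "\<dots> = int (n-2) * int p - 2 * int (card E)"
  proof -
    have "(\<Sum>v\<in>V. D v) = (\<Sum>v\<in>V. int (n-2)) - (\<Sum>v\<in>V. int (degree V E v))"
      unfolding D_def by (simp add: sum_subtractf)
    also have "(\<Sum>v\<in>V. int (degree V E v)) = int (\<Sum>v\<in>V. degree V E v)" by simp
    also have "(\<Sum>v\<in>V. degree V E v) = 2 * card E" using handshake[OF sgE[folded V_def]] .
    finally show ?thesis by (simp add: V_def)
  qed
  finally have up_int: "2 * int (ex p VT ET) + min (2 * (int N + int r)) (int r * (int N - int r)) \<le> int (n-2) * int p"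
    using cE by simp
  note upper0 = fin_arith[OF up_int]
  have e1: "real (n - 1 + r) = real N + real r" by (simp add: N_def)
  have upper: "real (ex p VT ET) \<le> real (n - 2) * real p / 2
            - min (real (n - 1 + r)) (real r * real (n - 1 - r) / 2)"
    using upper0 unfolding e1 rN' .
  have eq: "r \<in> {0, 1, 2, n - 5, n - 4, n - 3, n - 2} \<longrightarrow>
            real (ex p VT ET) = (real (n - 2) * real p - real r * real (n - 1 - r)) / 2"
  proof
    assume r: "r \<in> {0, 1, 2, n - 5, n - 4, n - 3, n - 2}"
    obtain j where j: "n = j + 10" using n by (metis add.commute le_Suc_ex)
    have "r * (n - 1 - r) \<le> 2 * (n - 1 + r)" using r unfolding j by auto
    then have "real (r * (n - 1 - r)) \<le> real (2 * (n - 1 + r))" by (simp only: of_nat_le_iff)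
    then have "real r * real (n - 1 - r) / 2 \<le> real (n - 1 + r)" by simp
    then have "min (real (n - 1 + r)) (real r * real (n - 1 - r) / 2) = real r * real (n - 1 - r) / 2" by simp
    then show "real (ex p VT ET) = (real (n - 2) * real p - real r * real (n - 1 - r)) / 2"
      using upper lower by (simp add: diff_divide_distrib)
  qed
  show ?thesis using lower upper eq by blast
qed


end
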